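(* Let $A\in\mathbb{R}^{m\times n}$, $b\in\mathbb{R}^m$, $f(x)=\frac12\|Ax-b\|^2=\frac12x^tQx-x^tc+\frac12b^tb$ with $Q=A^tA$, $c=A^tb$. Suppose IMRO-2D is applied to minimizing $f$ from a starting point $x^0$. Then the sequence of iterates generated by IMRO-2D is the same as the sequence of iterates generated by the linear conjugate gradient method for minimizing $\frac12x^tQx-x^tc$ started at $x^0$.
   Context: IMRO-2D applied to $f$ (with no $\ell_1$ term) is the following iteration. Let $r^0=\nabla f(x^0)=Qx^0-c$, $\sigma_0=\frac{(r^0)^tQr^0}{(r^0)^tr^0}$ and $x^1=x^0-\frac{1}{\sigma_0}r^0$. For $k\ge1$, with $r^k=\nabla f(x^k)$ and $d^k=x^k-x^{k-1}$, one chooses a scalar $\sigma_k$ and a vector $u_k\in\mathrm{span}\{r^k,d^k\}$ such that $H_k=\sigma_k\mathbf I-u_ku_k^t$ is positive definite and $w^tH_kw=w^tQw$ for all $w\in\mathrm{span}\{r^k,d^k\}$ (i.e. the quadratic model $f(x^k)+\langle\nabla f(x^k),x-x^k\rangle+\frac12(x-x^k)^tH_k(x-x^k)$ coincides with $f$ on $x^k+\mathrm{span}\{r^k,d^k\}$), and sets $x^{k+1}=x^k-H_k^{-1}r^k$, the minimizer of that quadratic model. The statement concerns iterates for which this construction is well defined. The linear conjugate gradient method is the standard one: $p^0=-r^0$, $\alpha_k=\frac{(r^k)^tr^k}{(p^k)^tQp^k}$, $x^{k+1}=x^k+\alpha_kp^k$, $r^{k+1}=r^k+\alpha_kQp^k$,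 $p^{k+1}=-r^{k+1}+\frac{(r^{k+1})^tr^{k+1}}{(r^k)^tr^k}p^k$. *)

theory Defs
  imports "HOL-Analysis.Analysis"
begin

definition outer :: "real^'n \<Rightarrow> real^'n^'n" where
  "outer u = (\<chi> i j. u$i * u$j)"

definition pos_def :: "real^'n^'n \<Rightarrow> bool" where
  "pos_def H \<longleftrightarrow> (\<forall>w. w \<noteq> 0 \<longrightarrow> w \<bullet> (H *v w) > 0)"

text \<open>Linear conjugate gradient for min 1/2 x^t Q x - x^t c started at x0:
  the k-th state is (x^k, r^k, p^k).\<close>
fun cg :: "real^'n^'n \<Rightarrow> real^'n \<Rightarrow> real^'n \<Rightarrow> nat \<Rightarrow> (real^'n) \<times> (real^'n) \<times> (real^'n)" where
  "cg Q c x0 0 = (x0, Q *v x0 - c, - (Q *v x0 - c))"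
| "cg Q c x0 (Suc k) =
     (let (x, r, p) = cg Q c x0 k;
          \<alpha> = (r \<bullet> r) / (p \<bullet> (Q *v p));
          x' = x + \<alpha> *\<^sub>R p;
          r' = r + \<alpha> *\<^sub>R (Q *v p);
          p' = - r' + ((r' \<bullet> r') / (r \<bullet> r)) *\<^sub>R p
      in (x', r', p'))"

definition cg_iter :: "real^'n^'n \<Rightarrow> real^'n \<Rightarrow> real^'n \<Rightarrow> nat \<Rightarrow> real^'n" where
  "cg_iter Q c x0 k = fst (cg Q c x0 k)"

text \<open>IMRO-2D applied to f(x) = 1/2 x^t Q x - x^t c + const (no l1 term):
  x is a sequence of IMRO-2D iterates started at x0 (with some admissible
  choice of sigma_k, u_k at every step k >= 1).\<close>
definition imro2d_seq :: "real^'n^'n \<Rightarrow> real^'n \<Rightarrow> real^'n \<Rightarrow> (nat \<Rightarrow> real^'n) \<Rightarrow> bool" where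
  "imro2d_seq Q c x0 x \<longleftrightarrow>
     (let r = (\<lambda>k. Q *v x k - c) in
      x 0 = x0 \<and>
      x 1 = x 0 - (1 / ((r 0 \<bullet> (Q *v r 0)) / (r 0 \<bullet> r 0))) *\<^sub>R r 0 \<and>
      (\<forall>k\<ge>1. \<exists>(\<sigma>::real) u.
          let d = x k - x (k - 1); H = \<sigma> *\<^sub>R mat 1 - outer u in
          u \<in> span {r k, d} \<and> pos_def H \<and>
          (\<forall>w \<in> span {r k, d}. w \<bullet> (H *v w) = w \<bullet> (Q *v w)) \<and>
          x (Suc k) = x k - matrix_inv H *v r k))"

end

theory Submission
  imports Defs
begin

definition "CX Q c x0 k = fst (cg Q c x0 k)"
definition "CR Q c x0 k = fst (snd (cg Q c x0 k))"
definition "CP Q c x0 k = snd (snd (cg Q c x0 k))"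
definition "Cal Q c x0 k = (CR Q c x0 k \<bullet> CR Q c x0 k) / (CP Q c x0 k \<bullet> (Q *v CP Q c x0 k))"

lemma C0: "CX Q c x0 0 = x0" "CR Q c x0 0 = Q *v x0 - c" "CP Q c x0 0 = - (Q *v x0 - c)"
  by (simp_all add: CX_def CR_def CP_def)

lemma CSuc:
  "CX Q c x0 (Suc k) = CX Q c x0 k + Cal Q c x0 k *\<^sub>R CP Q c x0 k"
  "CR Q c x0 (Suc k) = CR Q c x0 k + Cal Q c x0 k *\<^sub>R (Q *v CP Q c x0 k)"
  "CP Q c x0 (Suc k) = - CR Q c x0 (Suc k) + ((CR Q c x0 (Suc k) \<bullet> CR Q c x0 (Suc k)) / (CR Q c x0 k \<bullet> CR Q c x0 k)) *\<^sub>R CP Q c x0 k"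
proof -
  obtain a r p where e: "cg Q c x0 k = (a, r, p)" by (metis prod_cases3)
  show "CX Q c x0 (Suc k) = CX Q c x0 k + Cal Q c x0 k *\<^sub>R CP Q c x0 k"
    "CR Q c x0 (Suc k) = CR Q c x0 k + Cal Q c x0 k *\<^sub>R (Q *v CP Q c x0 k)"
    "CP Q c x0 (Suc k) = - CR Q c x0 (Suc k) + ((CR Q c x0 (Suc k) \<bullet> CR Q c x0 (Suc k)) / (CR Q c x0 k \<bullet> CR Q c x0 k)) *\<^sub>R CP Q c x0 k"
    by (simp_all add: CX_def CR_def CP_def Cal_def e Let_def)
qed

lemma step:
  fixes Q :: "real^'n^'n"
  assumes sym: "\<And>v w. v \<bullet> (Q *v w) = w \<bullet> (Q *v v)"
    and rng: "\<And>x p. p \<bullet> (Q *v p) = 0 \<Longrightarrow> (Q *v x - c) \<bullet> p = 0"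
    and i1: "r = Q *v x - c" and i2: "r \<bullet> p = - (r \<bullet> r)"
    and i3: "r \<bullet> (Q *v p) = - (p \<bullet> (Q *v p))"
    and al: "\<alpha> = (r \<bullet> r) / (p \<bullet> (Q *v p))"
    and dx: "x' = x + \<alpha> *\<^sub>R p" and dr: "r' = r + \<alpha> *\<^sub>R (Q *v p)"
    and dp: "p' = - r' + ((r' \<bullet> r') / (r \<bullet> r)) *\<^sub>R p"
  shows "r' = Q *v x' - c \<and> r' \<bullet> p' = - (r' \<bullet> r') \<and> r' \<bullet> (Q *v p') = - (p' \<bullet> (Q *v p'))
     \<and> r' \<bullet> p = 0 \<and> r' \<bullet> r = 0 \<and> p' \<bullet> (Q *v p) = 0"
proof (cases "r = 0")
  case True
  then have "\<alpha> = 0" "r' = 0" "p' = 0" "x' = x" using al dr dp dx by auto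
  then show ?thesis using True i1 by simp
next
  case False
  define q where "q = p \<bullet> (Q *v p)"
  have rr: "r \<bullet> r \<noteq> 0" using False by simp
  have q0: "q \<noteq> 0" using rng[of p x] i1 i2 rr q_def by auto
  have aq: "\<alpha> * q = r \<bullet> r" using al q0 q_def by simp
  have a0: "\<alpha> \<noteq> 0" using aq rr by auto
  have Qp: "(Q *v p) \<bullet> p = q" using q_def by (simp add: inner_commute)
  have e1: "r' \<bullet> p = 0" using dr i2 Qp aq by (simp add: inner_add_left)
  have "r' \<bullet> r = r \<bullet> r + \<alpha> * (r \<bullet> (Q *v p))" using dr by (simp add: inner_add_left inner_add_right inner_commute)
  then have e2: "r' \<bullet> r = 0" using i3 aq q_def by simp
  have "\<alpha> *\<^sub>R (Q *v p) = r' - r" using dr by simp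
  then have "\<alpha> * (r' \<bullet> (Q *v p)) = r' \<bullet> r'"
    using e2 by (metis diff_zero inner_diff_right inner_scaleR_right inner_commute)
  then have e3': "r' \<bullet> (Q *v p) = (r' \<bullet> r') * q / (r \<bullet> r)"
    using a0 aq rr by (simp add: field_simps) (metis mult.commute mult.left_commute)
  have "p' \<bullet> (Q *v p) = - (r' \<bullet> (Q *v p)) + ((r' \<bullet> r') / (r \<bullet> r)) * q"
    using dp q_def by (simp add: inner_add_left inner_diff_left)
  then have e3: "p' \<bullet> (Q *v p) = 0" using e3' by simp
  have e4: "r' \<bullet> p' = - (r' \<bullet> r')" using dp e1 by (simp add: inner_add_right inner_diff_right)
  have rp: "r' = - p' + ((r' \<bullet> r') / (r \<bullet> r)) *\<^sub>R p" using dp by simp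
  have e5: "r' \<bullet> (Q *v p') = - (p' \<bullet> (Q *v p'))"
    apply (subst rp) using e3 sym[of p p'] by (simp add: inner_add_left inner_diff_left)
  have e6: "r' = Q *v x' - c" using dx dr i1 by (simp add: algebra_simps)
  show ?thesis using e1 e2 e3 e4 e5 e6 by blast
qed

lemma qdot:
  fixes A :: "real^'n^'m"
  shows "v \<bullet> ((transpose A ** A) *v w) = (A *v v) \<bullet> (A *v w)"
proof -
  have "(transpose A ** A) *v w = (A *v w) v* A"
    by (metis matrix_vector_mul_assoc transpose_matrix_vector)
  then show ?thesis by (metis dot_lmul_matrix inner_commute)
qed

lemma rdot:
  fixes A :: "real^'n^'m"
  shows "((transpose A ** A) *v x - transpose A *v b) \<bullet> p = (A *v x - b) \<bullet> (A *v p)"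
proof -
  have "(transpose A ** A) *v x - transpose A *v b = (A *v x - b) v* A"
    by (metis matrix_vector_mul_assoc transpose_matrix_vector matrix_vector_mult_diff_distrib)
  then show ?thesis by (metis dot_lmul_matrix)
qed

lemma qsym:
  fixes A :: "real^'n^'m"
  shows "v \<bullet> ((transpose A ** A) *v w) = w \<bullet> ((transpose A ** A) *v v)"
  by (simp add: qdot inner_commute)

lemma qrng:
  fixes A :: "real^'n^'m"
  assumes "p \<bullet> ((transpose A ** A) *v p) = 0"
  shows "((transpose A ** A) *v x - transpose A *v b) \<bullet> p = 0"
proof -
  have "A *v p = 0" using assms by (simp add: qdot)
  then show ?thesis using rdot[of A x b p] by simp
qed

lemma negQ: "(Q::real^'n^'n) *v (- r) = - (Q *v r)"
  by (metis diff_0 matrix_vector_mult_diff_distrib matrix_vector_mult_0_right)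

lemma nextA:
  fixes A :: "real^'n^'m" and b :: "real^'m"
  defines "Q \<equiv> transpose A ** A" and "c \<equiv> transpose A *v b"
  assumes i1: "CR Q c x0 k = Q *v CX Q c x0 k - c" and i2: "CR Q c x0 k \<bullet> CP Q c x0 k = - (CR Q c x0 k \<bullet> CR Q c x0 k)"
     and i3: "CR Q c x0 k \<bullet> (Q *v CP Q c x0 k) = - (CP Q c x0 k \<bullet> (Q *v CP Q c x0 k))"
  shows "CR Q c x0 (Suc k) = Q *v CX Q c x0 (Suc k) - c \<and> CR Q c x0 (Suc k) \<bullet> CP Q c x0 (Suc k) = - (CR Q c x0 (Suc k) \<bullet> CR Q c x0 (Suc k))
     \<and> CR Q c x0 (Suc k) \<bullet> (Q *v CP Q c x0 (Suc k)) = - (CP Q c x0 (Suc k) \<bullet> (Q *v CP Q c x0 (Suc k)))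
     \<and> CR Q c x0 (Suc k) \<bullet> CP Q c x0 k = 0 \<and> CR Q c x0 (Suc k) \<bullet> CR Q c x0 k = 0
     \<and> CP Q c x0 (Suc k) \<bullet> (Q *v CP Q c x0 k) = 0"
proof (rule step[of Q c])
  show "\<And>v w. v \<bullet> (Q *v w) = w \<bullet> (Q *v v)" unfolding Q_def by (rule qsym)
  show "\<And>x p. p \<bullet> (Q *v p) = 0 \<Longrightarrow> (Q *v x - c) \<bullet> p = 0" unfolding Q_def c_def by (rule qrng)
qed (rule i1 i2 i3 CSuc Cal_def)+

lemma invA:
  fixes A :: "real^'n^'m" and b :: "real^'m"
  defines "Q \<equiv> transpose A ** A" and "c \<equiv> transpose A *v b"
  shows "CR Q c x0 k = Q *v CX Q c x0 k - c \<and> CR Q c x0 k \<bullet> CP Q c x0 k = - (CR Q c x0 k \<bullet> CR Q c x0 k)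
     \<and> CR Q c x0 k \<bullet> (Q *v CP Q c x0 k) = - (CP Q c x0 k \<bullet> (Q *v CP Q c x0 k))"
proof (induction k)
  case 0
  have g: "\<And>r. r \<bullet> (- r) = - (r \<bullet> r) \<and> r \<bullet> (Q *v (- r)) = - ((- r) \<bullet> (Q *v (- r)))"
    by (simp add: negQ)
  show ?case unfolding C0 using g by blast
next
  case (Suc k)
  then show ?case using nextA[of A b x0 k] unfolding Q_def c_def by blast
qed

lemma nextA':
  fixes A :: "real^'n^'m" and b :: "real^'m"
  defines "Q \<equiv> transpose A ** A" and "c \<equiv> transpose A *v b"
  shows "CR Q c x0 (Suc k) \<bullet> CP Q c x0 k = 0 \<and> CR Q c x0 (Suc k) \<bullet> CR Q c x0 k = 0
     \<and> CP Q c x0 (Suc k) \<bullet> (Q *v CP Q c x0 k) = 0"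
  using nextA[of A b x0 k] invA[of A b x0 k] unfolding Q_def c_def by blast

lemma Hform: "(\<sigma> *\<^sub>R mat 1 - outer u) *v (w::real^'n) = \<sigma> *\<^sub>R w - (u \<bullet> w) *\<^sub>R u"
proof -
  have "outer u *v w = (u \<bullet> w) *\<^sub>R u"
    by (simp add: vec_eq_iff matrix_vector_mult_def outer_def inner_vec_def sum_distrib_left sum_distrib_right mult.assoc mult.commute mult.left_commute)
  then show ?thesis by (simp add: matrix_vector_mult_diff_rdistrib flip: scaleR_matrix_vector_assoc)
qed

lemma posdef_inv:
  fixes H :: "real^'n^'n"
  assumes "pos_def H"
  shows "H *v (matrix_inv H *v r) = r"
proof -
  have "\<forall>x. H *v x = 0 \<longrightarrow> x = 0" using assms unfolding pos_def_def by force
  then have "invertible H" using matrix_left_invertible_ker invertible_left_inverse by blast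
  then have "H ** matrix_inv H = mat 1 \<and> matrix_inv H ** H = mat 1"
    unfolding invertible_def matrix_inv_def by (rule someI_ex)
  then show ?thesis by (simp add: matrix_vector_mul_assoc)
qed

lemma imro_step:
  fixes A :: "real^'n^'m" and b :: "real^'m" and u :: "real^'n" and \<sigma> :: real
  defines "Q \<equiv> transpose A ** A" and "c \<equiv> transpose A *v b"
  defines "H \<equiv> \<sigma> *\<^sub>R mat 1 - outer u"
  assumes uV: "u \<in> span {CR Q c x0 (Suc k), Cal Q c x0 k *\<^sub>R CP Q c x0 k}"
    and pd: "pos_def H"
    and mt: "\<forall>w \<in> span {CR Q c x0 (Suc k), Cal Q c x0 k *\<^sub>R CP Q c x0 k}. w \<bullet> (H *v w) = w \<bullet> (Q *v w)"
  shows "CX Q c x0 (Suc k) - matrix_inv H *v CR Q c x0 (Suc k) = CX Q c x0 (Suc (Suc k))"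
proof -
  define K where "K = Suc k"
  define r where "r = CR Q c x0 K"
  define d where "d = Cal Q c x0 k *\<^sub>R CP Q c x0 k"
  define V where "V = span {r, d}"
  define t where "t = Cal Q c x0 K *\<^sub>R CP Q c x0 K"
  have uV': "u \<in> V" using uV by (simp add: V_def r_def d_def K_def)
  have mt': "\<And>w. w \<in> V \<Longrightarrow> w \<bullet> (H *v w) = w \<bullet> (Q *v w)" using mt by (simp add: V_def r_def d_def K_def)
  have Hf: "\<And>w. H *v w = \<sigma> *\<^sub>R w - (u \<bullet> w) *\<^sub>R u" unfolding H_def by (rule Hform)
  have Hs: "\<And>v w. v \<bullet> (H *v w) = w \<bullet> (H *v v)" by (simp add: Hf inner_diff_right inner_commute)
  have Qs: "\<And>v w. v \<bullet> (Q *v w) = w \<bullet> (Q *v v)" unfolding Q_def by (rule qsym)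
  have XS: "CX Q c x0 (Suc K) = CX Q c x0 K + t" by (simp add: t_def CSuc)
  show ?thesis
  proof (cases "r = 0")
    case True
    then have "Cal Q c x0 K = 0" by (simp add: Cal_def r_def)
    then show ?thesis using True XS by (simp add: t_def r_def K_def)
  next
    case False
    have Ik: "CR Q c x0 k = Q *v CX Q c x0 k - c \<and> CR Q c x0 k \<bullet> CP Q c x0 k = - (CR Q c x0 k \<bullet> CR Q c x0 k)"
      using invA[of A b x0 k] unfolding Q_def c_def by blast
    have Nk: "CR Q c x0 (Suc k) \<bullet> CP Q c x0 k = 0 \<and> CR Q c x0 (Suc k) \<bullet> CR Q c x0 k = 0
      \<and> CP Q c x0 (Suc k) \<bullet> (Q *v CP Q c x0 k) = 0"
      using nextA'[of A b x0 k] unfolding Q_def c_def by blast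
    have NK: "CR Q c x0 (Suc K) \<bullet> CP Q c x0 K = 0 \<and> CR Q c x0 (Suc K) \<bullet> CR Q c x0 K = 0
      \<and> CP Q c x0 (Suc K) \<bullet> (Q *v CP Q c x0 K) = 0"
      using nextA'[of A b x0 K] unfolding Q_def c_def by blast
    have rk: "CR Q c x0 k \<noteq> 0"
    proof
      assume z: "CR Q c x0 k = 0"
      then have "Cal Q c x0 k = 0" by (simp add: Cal_def)
      then have "r = 0" using z by (simp add: r_def K_def CSuc)
      then show False using False by simp
    qed
    have ak: "Cal Q c x0 k \<noteq> 0"
    proof
      assume z: "Cal Q c x0 k = 0"
      have "CR Q c x0 k \<bullet> CR Q c x0 k = 0"
      proof (cases "CP Q c x0 k \<bullet> (Q *v CP Q c x0 k) = 0")
        case True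
        then have "CR Q c x0 k \<bullet> CP Q c x0 k = 0" using Ik qrng[of "CP Q c x0 k" A "CX Q c x0 k" b]
          unfolding Q_def c_def by simp
        then show ?thesis using Ik[THEN conjunct2] by linarith
      next
        case F: False
        then show ?thesis using z by (simp add: Cal_def)
      qed
      then show False using rk by simp
    qed
    define \<beta> where "\<beta> = (CR Q c x0 K \<bullet> CR Q c x0 K) / (CR Q c x0 k \<bullet> CR Q c x0 k)"
    have PK: "CP Q c x0 K = - r + (\<beta> / Cal Q c x0 k) *\<^sub>R d"
      using ak by (simp add: K_def CSuc(3) r_def \<beta>_def d_def)
    have rV: "r \<in> V" and dV: "d \<in> V" by (simp_all add: V_def span_base)
    have tV: "t \<in> V" unfolding t_def PK
      by (intro span_scale span_add span_neg rV dV[unfolded V_def] rV[unfolded V_def]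
          | unfold V_def)+
    have RS: "Q *v t + r = CR Q c x0 (Suc K)"
      by (simp add: t_def r_def CSuc matrix_vector_mult_scaleR)
    have o1: "CR Q c x0 (Suc K) \<bullet> r = 0" using NK by (simp add: r_def)
    have "CR Q c x0 (Suc K) \<bullet> CP Q c x0 k = CR Q c x0 K \<bullet> CP Q c x0 k + Cal Q c x0 K * (CP Q c x0 k \<bullet> (Q *v CP Q c x0 K))"
      by (simp add: CSuc inner_add_left inner_add_right inner_commute)
    also have "\<dots> = 0" using Nk Qs[of "CP Q c x0 k" "CP Q c x0 K"] by (simp add: K_def)
    finally have o2: "CR Q c x0 (Suc K) \<bullet> d = 0" by (simp add: d_def)
    have orth: "\<And>w. w \<in> V \<Longrightarrow> w \<bullet> (Q *v t + r) = 0"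
    proof -
      fix w assume "w \<in> V"
      then have "orthogonal (CR Q c x0 (Suc K)) w"
        unfolding V_def by (rule orthogonal_to_span) (use o1 o2 in \<open>auto simp: orthogonal_def\<close>)
      then show "w \<bullet> (Q *v t + r) = 0" by (simp add: RS orthogonal_def inner_commute)
    qed
    define y where "y = H *v t + r"
    have yV: "y \<in> V" unfolding y_def Hf
      using tV uV' rV unfolding V_def by (intro span_add span_diff span_scale) auto
    have ytV: "y + t \<in> V" using yV tV unfolding V_def by (rule span_add)
    have "(y + t) \<bullet> (H *v (y + t)) = (y + t) \<bullet> (Q *v (y + t))" using mt'[OF ytV] .
    moreover have "y \<bullet> (H *v y) = y \<bullet> (Q *v y)" using mt'[OF yV] .
    moreover have "t \<bullet> (H *v t) = t \<bullet> (Q *v t)" using mt'[OF tV] .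
    moreover have "t \<bullet> (H *v y) = y \<bullet> (H *v t)" by (rule Hs)
    moreover have "t \<bullet> (Q *v y) = y \<bullet> (Q *v t)" by (rule Qs)
    ultimately have pol: "y \<bullet> (H *v t) = y \<bullet> (Q *v t)"
      by (simp add: matrix_vector_right_distrib inner_add_left inner_add_right)
    have "y \<bullet> y = y \<bullet> (Q *v t + r)" using pol by (simp add: y_def inner_add_right)
    also have "\<dots> = 0" using orth[OF yV] .
    finally have "y = 0" by simp
    then have Ht: "H *v t = - r" by (simp add: y_def eq_neg_iff_add_eq_0)
    define s where "s = - (matrix_inv H *v r)"
    have Hs': "H *v s = - r" unfolding s_def by (simp add: negQ posdef_inv[OF pd])
    have "H *v (s - t) = 0" using Hs' Ht by (simp add: matrix_vector_mult_diff_distrib)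
    then have "s - t = 0" using pd unfolding pos_def_def by (metis inner_zero_right less_irrefl)
    then have "s = t" by simp
    then show ?thesis using XS by (simp add: s_def r_def K_def)
  qed
qed

theorem theorem1:
  fixes A :: "real^'n^'m" and b :: "real^'m" and x0 :: "real^'n"
    and x :: "nat \<Rightarrow> real^'n"
  assumes "imro2d_seq (transpose A ** A) (transpose A *v b) x0 x"
  shows "\<forall>k. x k = cg_iter (transpose A ** A) (transpose A *v b) x0 k"
proof -
  define Q where "Q = transpose A ** A"
  define c where "c = transpose A *v b"
  have h: "imro2d_seq Q c x0 x" using assms by (simp add: Q_def c_def)
  have h0: "x 0 = x0" using h by (simp add: imro2d_seq_def Let_def)
  have h1: "x 1 = x 0 - (1 / (((Q *v x 0 - c) \<bullet> (Q *v (Q *v x 0 - c))) / ((Q *v x 0 - c) \<bullet> (Q *v x 0 - c)))) *\<^sub>R (Q *v x 0 - c)"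
    using h unfolding imro2d_seq_def Let_def by blast
  have hk: "\<forall>k\<ge>1. \<exists>(\<sigma>::real) u.
          u \<in> span {Q *v x k - c, x k - x (k - 1)} \<and> pos_def (\<sigma> *\<^sub>R mat 1 - outer u) \<and>
          (\<forall>w \<in> span {Q *v x k - c, x k - x (k - 1)}. w \<bullet> ((\<sigma> *\<^sub>R mat 1 - outer u) *v w) = w \<bullet> (Q *v w)) \<and>
          x (Suc k) = x k - matrix_inv (\<sigma> *\<^sub>R mat 1 - outer u) *v (Q *v x k - c)"
    using h unfolding imro2d_seq_def Let_def by blast
  have P: "x k = CX Q c x0 k \<and> x (Suc k) = CX Q c x0 (Suc k)" for k
  proof (induction k)
    case 0
    have g: "\<And>r::real^'n. x0 - (1 / ((r \<bullet> (Q *v r)) / (r \<bullet> r))) *\<^sub>R r = x0 + ((r \<bullet> r) / ((- r) \<bullet> (Q *v (- r)))) *\<^sub>R (- r)"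
      by (simp add: negQ)
    have "x 1 = CX Q c x0 1"
      unfolding h1 h0 g by (simp only: One_nat_def CSuc C0 Cal_def)
    then show ?case using h0 by (simp add: C0)
  next
    case (Suc k)
    obtain \<sigma> u where
      s1: "u \<in> span {Q *v x (Suc k) - c, x (Suc k) - x k}" and
      s2: "pos_def (\<sigma> *\<^sub>R mat 1 - outer u)" and
      s3: "\<forall>w \<in> span {Q *v x (Suc k) - c, x (Suc k) - x k}. w \<bullet> ((\<sigma> *\<^sub>R mat 1 - outer u) *v w) = w \<bullet> (Q *v w)" and
      s4: "x (Suc (Suc k)) = x (Suc k) - matrix_inv (\<sigma> *\<^sub>R mat 1 - outer u) *v (Q *v x (Suc k) - c)"
      using hk[rule_format, of "Suc k"] by auto
    have e1: "Q *v x (Suc k) - c = CR Q c x0 (Suc k)"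
      using Suc invA[of A b x0 "Suc k", folded Q_def c_def] by simp
    have e2: "x (Suc k) - x k = Cal Q c x0 k *\<^sub>R CP Q c x0 k"
      using Suc by (simp add: CSuc)
    note st = imro_step[of u A b x0 k \<sigma>, folded Q_def c_def]
    have "x (Suc (Suc k)) = CX Q c x0 (Suc (Suc k))"
      using st s1 s2 s3 s4 Suc[THEN conjunct2] unfolding e1 e2 by simp
    then show ?case using Suc by simp
  qed
  show ?thesis using P by (simp add: cg_iter_def CX_def Q_def c_def)
qed

end
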